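(* Let $f(x)=1+a_1x+\cdots+a_dx^d\in\mathbb Z[x]$ with $d\ge2$ and $a_d\neq0$, and let $e_f(k)$ ($k\ge1$) be the unique integers with $f(x)=\prod_{k\ge1}(1-x^k)^{e_f(k)}$ in $\mathbb Z[[x]]$. Let $\alpha_1,\dots,\alpha_d$ be the complex roots of $f$ (with multiplicity), ordered so that $|\alpha_1|\le|\alpha_2|\le\cdots\le|\alpha_d|$, and assume $|\alpha_1|<|\alpha_2|$. Then for every $k\ge1$, $$\Big|e_f(k)-\frac{\alpha_1^{-k}}{k}\Big|\le\frac{\tau(k)}{k}\big(|\alpha_1|^{-k/2}+d\,|\alpha_2|^{-k}\big),$$ where $\tau(k)$ is the number of positive divisors of $k$. If $d=1$ (so $f$ has a single root $\alpha_1$), then $|e_f(k)-\alpha_1^{-k}/k|\le\frac{\tau(k)}{k}|\alpha_1|^{-k/2}$.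
   Context: For any $f\in\mathbb Z[[x]]$ with $f(0)=1$ there exist unique integers $e_f(k)$, $k\ge1$, with $f(x)=\prod_{k\ge1}(1-x^k)^{e_f(k)}$ in $\mathbb Z[[x]]$. *)

theory Defs
  imports Complex_Main "HOL-Computational_Algebra.Polynomial_FPS"
begin

text \<open>The identity f(x) = prod_{k>=1} (1 - x^k)^(e k) in Z[[x]], expressed without
  inverses: for every N, modulo x^(N+1) (factors with k > N are 1 modulo x^(N+1)),
  f * prod_{k<=N, e k<0} (1-x^k)^(-e k) = prod_{k<=N, e k>0} (1-x^k)^(e k).\<close>
definition euler_product_exps :: "int poly \<Rightarrow> (nat \<Rightarrow> int) \<Rightarrow> bool" where
  "euler_product_exps f e \<longleftrightarrow>
     (\<forall>N n. n \<le> N \<longrightarrow>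
        fps_nth (fps_of_poly f * (\<Prod>k\<in>{1..N}. (1 - fps_X ^ k) ^ nat (- e k))) n
      = fps_nth (\<Prod>k\<in>{1..N}. (1 - fps_X ^ k) ^ nat (e k)) n)"

definition ef :: "int poly \<Rightarrow> nat \<Rightarrow> int" where
  "ef f = (THE e. euler_product_exps f e \<and> e 0 = 0)"

definition num_divisors :: "nat \<Rightarrow> nat" where
  "num_divisors k = card {m. m dvd k}"

end

theory Submission
  imports Defs "HOL-Computational_Algebra.Squarefree" "HOL-Analysis.Convex"
begin

unbundle fps_syntax

lemma shift_coeff:
  fixes g :: "'a::comm_ring_1 fps"
  assumes "N \<ge> 1" "n \<le> N"
  shows "(g * (1 - fps_X ^ N) ^ j) $ n = g $ n - (if n = N then of_nat j * g $ 0 else 0)"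
proof (induction j)
  case 0 then show ?case by simp
next
  case (Suc j)
  define h where "h = g * (1 - fps_X ^ N) ^ j"
  have e1: "g * (1 - fps_X ^ N) ^ Suc j = h - fps_X ^ N * h"
    by (simp add: h_def algebra_simps)
  have e2: "h $ 0 = g $ 0" using assms by (simp add: h_def fps_nth_power_0 zero_power)
  have e3: "(fps_X ^ N * h) $ n = (if n = N then h $ 0 else 0)"
    using assms by (auto simp: fps_X_power_mult_nth)
  have e4: "h $ n = g $ n - (if n = N then of_nat j * g $ 0 else 0)" using Suc by (simp add: h_def)
  have "(g * (1 - fps_X ^ N) ^ Suc j) $ n = h $ n - (fps_X ^ N * h) $ n"
    unfolding e1 by simp
  also have "\<dots> = g $ n - (if n = N then of_nat (Suc j) * g $ 0 else 0)"
    unfolding e3 e4 e2 by (simp add: algebra_simps)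
  finally show ?case .
qed

definition Pp :: "(nat \<Rightarrow> int) \<Rightarrow> nat \<Rightarrow> int fps" where
  "Pp e N = (\<Prod>k\<in>{1..N}. (1 - fps_X ^ k) ^ nat (e k))"
definition Pm :: "(nat \<Rightarrow> int) \<Rightarrow> nat \<Rightarrow> int fps" where
  "Pm e N = (\<Prod>k\<in>{1..N}. (1 - fps_X ^ k) ^ nat (- e k))"
definition EP :: "int poly \<Rightarrow> (nat \<Rightarrow> int) \<Rightarrow> nat \<Rightarrow> bool" where
  "EP f e N \<longleftrightarrow> (\<forall>n\<le>N. (fps_of_poly f * Pm e N) $ n = Pp e N $ n)"

lemma epe_iff: "euler_product_exps f e \<longleftrightarrow> (\<forall>N. EP f e N)"
  unfolding euler_product_exps_def EP_def Pp_def Pm_def by blast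

lemma fps_prod_nth_0: "finite A \<Longrightarrow> (\<Prod>k\<in>A. g k) $ 0 = (\<Prod>k\<in>A. (g k) $ 0)"
  by (induction A rule: finite_induct) auto

lemma factor_nth_0: "k \<ge> 1 \<Longrightarrow> ((1 - fps_X ^ k) ^ j :: 'a::comm_ring_1 fps) $ 0 = 1"
  by (simp add: fps_nth_power_0 zero_power)

lemma Pp_0: "Pp e N $ 0 = 1" and Pm_0: "Pm e N $ 0 = 1"
  unfolding Pp_def Pm_def by (simp_all add: fps_prod_nth_0 factor_nth_0)

lemma Pp_Suc: "Pp e (Suc N) = Pp e N * (1 - fps_X ^ Suc N) ^ nat (e (Suc N))"
proof -
  have "{1..Suc N} = insert (Suc N) {1..N}" by auto
  then show ?thesis unfolding Pp_def by (simp add: mult.commute)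
qed

lemma Pm_Suc: "Pm e (Suc N) = Pm e N * (1 - fps_X ^ Suc N) ^ nat (- e (Suc N))"
proof -
  have "{1..Suc N} = insert (Suc N) {1..N}" by auto
  then show ?thesis unfolding Pm_def by (simp add: mult.commute)
qed

lemma Pp_cong: "(\<And>k. 1 \<le> k \<Longrightarrow> k \<le> N \<Longrightarrow> e k = e' k) \<Longrightarrow> Pp e N = Pp e' N"
  unfolding Pp_def by (rule prod.cong) auto
lemma Pm_cong: "(\<And>k. 1 \<le> k \<Longrightarrow> k \<le> N \<Longrightarrow> e k = e' k) \<Longrightarrow> Pm e N = Pm e' N"
  unfolding Pm_def by (rule prod.cong) auto
lemma EP_cong: "(\<And>k. 1 \<le> k \<Longrightarrow> k \<le> N \<Longrightarrow> e k = e' k) \<Longrightarrow> EP f e N = EP f e' N"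
  unfolding EP_def using Pp_cong[of N e e'] Pm_cong[of N e e'] by simp

lemma EP_0: "coeff f 0 = 1 \<Longrightarrow> EP f e 0"
  unfolding EP_def by (simp add: Pp_0 Pm_0)

lemma EP_Suc:
  assumes f0: "coeff f 0 = 1"
  shows "EP f e (Suc N) \<longleftrightarrow>
     EP f e N \<and> e (Suc N) = Pp e N $ Suc N - (fps_of_poly f * Pm e N) $ Suc N"
proof -
  define F where "F = fps_of_poly f"
  have F0: "(F * Pm e N) $ 0 = 1" using f0 by (simp add: F_def Pm_0)
  have A: "(F * Pm e (Suc N)) $ n = (F * Pm e N) $ n - (if n = Suc N then int (nat (- e (Suc N))) else 0)"
    if "n \<le> Suc N" for n
    using shift_coeff[of "Suc N" n "F * Pm e N" "nat (- e (Suc N))"] that F0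
    by (simp add: Pm_Suc mult.assoc)
  have B: "Pp e (Suc N) $ n = Pp e N $ n - (if n = Suc N then int (nat (e (Suc N))) else 0)"
    if "n \<le> Suc N" for n
    using shift_coeff[of "Suc N" n "Pp e N" "nat (e (Suc N))"] that
    by (simp add: Pp_Suc Pp_0)
  have "EP f e (Suc N) \<longleftrightarrow> (\<forall>n\<le>N. (F * Pm e N) $ n = Pp e N $ n) \<and>
      (F * Pm e (Suc N)) $ Suc N = Pp e (Suc N) $ Suc N"
    unfolding EP_def F_def[symmetric] using A B by (auto simp: le_Suc_eq)
  also have "(F * Pm e (Suc N)) $ Suc N = Pp e (Suc N) $ Suc N \<longleftrightarrow>
      e (Suc N) = Pp e N $ Suc N - (F * Pm e N) $ Suc N"
    using A[of "Suc N"] B[of "Suc N"] by auto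
  finally show ?thesis unfolding EP_def F_def by simp
qed

primrec gseq :: "int poly \<Rightarrow> nat \<Rightarrow> nat \<Rightarrow> int" where
  "gseq f 0 = (\<lambda>_. 0)"
| "gseq f (Suc N) = (gseq f N)(Suc N := Pp (gseq f N) N $ Suc N - (fps_of_poly f * Pm (gseq f N) N) $ Suc N)"

lemma gseq_zero: "k > N \<Longrightarrow> gseq f N k = 0"
  by (induction N) auto

lemma gseq_stable: "k \<le> N \<Longrightarrow> gseq f (N + j) k = gseq f N k"
  by (induction j) auto

lemma gseq_stable': "k \<le> N \<Longrightarrow> N \<le> M \<Longrightarrow> gseq f M k = gseq f N k"
  using gseq_stable[of k N f "M - N"] by simp

lemma gseq_EP: assumes f0: "coeff f 0 = 1" shows "EP f (gseq f N) N"
proof (induction N)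
  case 0 then show ?case using EP_0[OF f0] .
next
  case (Suc N)
  have agree: "gseq f (Suc N) k = gseq f N k" if "k \<le> N" for k
    using that by simp
  have h1: "EP f (gseq f (Suc N)) N" using Suc EP_cong[of N "gseq f (Suc N)" "gseq f N" f] agree by simp
  have h2: "Pp (gseq f (Suc N)) N = Pp (gseq f N) N" by (rule Pp_cong) (simp add: agree)
  have h3: "Pm (gseq f (Suc N)) N = Pm (gseq f N) N" by (rule Pm_cong) (simp add: agree)
  have h4: "gseq f (Suc N) (Suc N) = Pp (gseq f N) N $ Suc N - (fps_of_poly f * Pm (gseq f N) N) $ Suc N"
    by simp
  show ?case unfolding EP_Suc[OF f0, of "gseq f (Suc N)" N] h2 h3 h4 using h1 by simp
qed

lemma EP_unique:
  assumes f0: "coeff f 0 = 1" and e: "\<forall>N. EP f e N" "e 0 = 0" and e': "\<forall>N. EP f e' N" "e' 0 = 0"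
  shows "e k = e' k"
proof (induction k rule: less_induct)
  case (less k)
  show ?case
  proof (cases k)
    case 0 then show ?thesis using e e' by simp
  next
    case (Suc N)
    have "Pp e N = Pp e' N" by (rule Pp_cong) (use less Suc in auto)
    moreover have "Pm e N = Pm e' N" by (rule Pm_cong) (use less Suc in auto)
    moreover have "e (Suc N) = Pp e N $ Suc N - (fps_of_poly f * Pm e N) $ Suc N"
      using e(1) EP_Suc[OF f0, of e N] by blast
    moreover have "e' (Suc N) = Pp e' N $ Suc N - (fps_of_poly f * Pm e' N) $ Suc N"
      using e'(1) EP_Suc[OF f0, of e' N] by blast
    ultimately show ?thesis using Suc by simp
  qed
qed

lemma ef_spec:
  assumes f0: "coeff f 0 = 1"
  shows "euler_product_exps f (ef f) \<and> ef f 0 = 0"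
proof -
  define e where "e = (\<lambda>k. gseq f k k)"
  have "EP f e N" for N
  proof -
    have "EP f e N = EP f (gseq f N) N"
    proof (rule EP_cong)
      fix k assume "1 \<le> k" "k \<le> N"
      then show "e k = gseq f N k" unfolding e_def using gseq_stable'[of k k N f] by simp
    qed
    then show ?thesis using gseq_EP[OF f0] by simp
  qed
  moreover have "e 0 = 0" by (simp add: e_def)
  ultimately have ex: "euler_product_exps f e \<and> e 0 = 0" by (simp add: epe_iff)
  show ?thesis unfolding ef_def
  proof (rule theI[of _ e])
    show "euler_product_exps f e \<and> e 0 = 0" by (rule ex)
    fix e' assume "euler_product_exps f e' \<and> e' 0 = 0"
    then have "\<forall>N. EP f e' N" "e' 0 = 0" by (simp_all add: epe_iff)
    moreover have "\<forall>N. EP f e N" "e 0 = 0" using ex by (simp_all add: epe_iff)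
    ultimately show "e' = e" using EP_unique[OF f0] by blast
  qed
qed

definition Dx :: "complex fps \<Rightarrow> complex fps" where "Dx g = fps_X * fps_deriv g"
definition Lg :: "complex fps \<Rightarrow> complex fps" where "Lg g = Dx g * inverse g"

lemma Dx_nth: "Dx g $ n = of_nat n * g $ n"
  by (cases n) (simp_all add: Dx_def)

lemma Dx_mult: "Dx (g * h) = Dx g * h + g * Dx h"
  by (simp add: Dx_def algebra_simps)

lemma Lg_mult_self: "g $ 0 \<noteq> 0 \<Longrightarrow> Lg g * g = Dx g"
  unfolding Lg_def by (simp add: mult.assoc inverse_mult_eq_1)

lemma nz_of_nth0: "g $ 0 \<noteq> 0 \<Longrightarrow> g \<noteq> (0::complex fps)"
  by auto

lemma Lg_unique: assumes "g $ 0 \<noteq> 0" "h * g = Dx g" shows "Lg g = h"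
proof -
  have "(Lg g - h) * g = 0" using Lg_mult_self[OF assms(1)] assms(2) by (simp add: algebra_simps)
  then show ?thesis using nz_of_nth0[OF assms(1)] by simp
qed

lemma Lg_mult: assumes "g $ 0 \<noteq> 0" "h $ 0 \<noteq> 0" shows "Lg (g * h) = Lg g + Lg h"
proof (rule Lg_unique)
  show "(g * h) $ 0 \<noteq> 0" using assms by simp
  have "(Lg g + Lg h) * (g * h) = (Lg g * g) * h + g * (Lg h * h)" by (simp add: algebra_simps)
  also have "\<dots> = Dx (g * h)" using assms by (simp add: Lg_mult_self Dx_mult)
  finally show "(Lg g + Lg h) * (g * h) = Dx (g * h)" .
qed

lemma Lg_one: "Lg 1 = 0"
  by (rule Lg_unique) (simp_all add: Dx_def)

lemma Lg_power: assumes "g $ 0 \<noteq> 0" shows "Lg (g ^ j) = of_nat j * Lg g"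
proof (induction j)
  case 0 then show ?case by (simp add: Lg_one)
next
  case (Suc j)
  have "Lg (g ^ Suc j) = Lg (g * g ^ j)" by simp
  also have "\<dots> = Lg g + Lg (g ^ j)" using assms by (intro Lg_mult) (simp_all add: fps_nth_power_0)
  finally show ?case using Suc by (simp add: algebra_simps)
qed

lemma Lg_prod: "finite A \<Longrightarrow> (\<forall>k\<in>A. g k $ 0 \<noteq> 0) \<Longrightarrow> Lg (\<Prod>k\<in>A. g k) = (\<Sum>k\<in>A. Lg (g k))"
proof (induction A rule: finite_induct)
  case empty then show ?case by (simp add: Lg_one)
next
  case (insert x F)
  have "(\<Prod>k\<in>F. g k) $ 0 \<noteq> 0"
  proof -
    have "(\<Prod>k\<in>F. g k) $ 0 = (\<Prod>k\<in>F. g k $ 0)"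
      using insert(1) by (induction F rule: finite_induct) auto
    then show ?thesis using insert by simp
  qed
  then show ?case using insert by (simp add: Lg_mult)
qed

lemma Lg_prod_list: "(\<forall>x\<in>set xs. g x $ 0 \<noteq> 0) \<Longrightarrow> Lg (\<Prod>x\<leftarrow>xs. g x) = (\<Sum>x\<leftarrow>xs. Lg (g x))"
proof (induction xs)
  case Nil then show ?case by (simp add: Lg_one)
next
  case (Cons a xs)
  have "(\<Prod>x\<leftarrow>xs. g x) $ 0 \<noteq> 0"
  proof -
    have "(\<Prod>x\<leftarrow>xs. g x) $ 0 = (\<Prod>x\<leftarrow>xs. g x $ 0)"
      by (induction xs) auto
    then show ?thesis using Cons by (auto simp add: prod_list_zero_iff)
  qed
  then show ?case using Cons by (simp add: Lg_mult)
qed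

lemma Lg_trunc:
  assumes g0: "g $ 0 \<noteq> 0" and eq: "\<And>i. i \<le> N \<Longrightarrow> g $ i = h $ i"
  shows "n \<le> N \<Longrightarrow> Lg g $ n = Lg h $ n"
proof (induction n rule: less_induct)
  case (less n)
  have h0: "h $ 0 \<noteq> 0" using g0 eq[of 0] by simp
  have sg: "(\<Sum>i=0..n. Lg g $ i * g $ (n - i)) = of_nat n * g $ n"
    using arg_cong[OF Lg_mult_self[OF g0], of "\<lambda>x. x $ n"] by (simp add: fps_mult_nth Dx_nth)
  have sh: "(\<Sum>i=0..n. Lg h $ i * h $ (n - i)) = of_nat n * h $ n"
    using arg_cong[OF Lg_mult_self[OF h0], of "\<lambda>x. x $ n"] by (simp add: fps_mult_nth Dx_nth)
  have split: "(\<Sum>i=0..n. F i) = F n + (\<Sum>i<n. F i)" for F :: "nat \<Rightarrow> complex"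
    by (simp add: atLeast0AtMost lessThan_Suc_atMost[symmetric])
  have rest: "(\<Sum>i<n. Lg g $ i * g $ (n - i)) = (\<Sum>i<n. Lg h $ i * h $ (n - i))"
    by (rule sum.cong) (use less eq in auto)
  have e1: "Lg g $ n * g $ 0 = of_nat n * g $ n - (\<Sum>i<n. Lg g $ i * g $ (n - i))"
    using sg split[of "\<lambda>i. Lg g $ i * g $ (n - i)"] by (simp add: eq_diff_eq)
  have e2: "Lg h $ n * h $ 0 = of_nat n * h $ n - (\<Sum>i<n. Lg h $ i * h $ (n - i))"
    using sh split[of "\<lambda>i. Lg h $ i * h $ (n - i)"] by (simp add: eq_diff_eq)
  have "Lg g $ n * g $ 0 = Lg h $ n * g $ 0"
    using e1 e2 rest eq[of n] eq[of 0] less(2) by simp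
  then show ?case using g0 by simp
qed

lemma Lg_1_minus_Xk:
  assumes k: "k \<ge> 1"
  shows "Lg (1 - fps_X ^ k) = Abs_fps (\<lambda>m. if m \<noteq> 0 \<and> k dvd m then - of_nat k else 0)"
    (is "_ = ?L")
proof (rule Lg_unique)
  show "(1 - fps_X ^ k :: complex fps) $ 0 \<noteq> 0" using k by simp
  show "?L * (1 - fps_X ^ k) = Dx (1 - fps_X ^ k)"
  proof (rule fps_ext)
    fix m
    have "(?L * (1 - fps_X ^ k)) $ m = ?L $ m - (?L * fps_X ^ k) $ m" by (simp add: algebra_simps)
    also have "\<dots> = (if m = k then - of_nat k else 0)"
    proof (cases "m < k")
      case True
      then have "\<not> (m \<noteq> 0 \<and> k dvd m)" using dvd_imp_le by fastforce
      then show ?thesis using True by (simp add: fps_X_power_mult_right_nth)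
    next
      case False
      then have "k dvd m \<longleftrightarrow> k dvd (m - k)" by (simp add: dvd_minus_self)
      then show ?thesis using False k by (auto simp: fps_X_power_mult_right_nth)
    qed
    also have "\<dots> = Dx (1 - fps_X ^ k) $ m" using k by (auto simp: Dx_nth)
    finally show "(?L * (1 - fps_X ^ k)) $ m = Dx (1 - fps_X ^ k) $ m" .
  qed
qed

lemma Lg_1_minus_cX:
  shows "Lg (1 - fps_const c * fps_X) = Abs_fps (\<lambda>m. if m = 0 then 0 else - (c ^ m))"
    (is "_ = ?L")
proof (rule Lg_unique)
  show "(1 - fps_const c * fps_X) $ 0 \<noteq> 0" by simp
  show "?L * (1 - fps_const c * fps_X) = Dx (1 - fps_const c * fps_X)"
  proof (rule fps_ext)
    fix m
    have "(?L * (1 - fps_const c * fps_X)) $ m = ?L $ m - c * (fps_X * ?L) $ m" by (simp add: algebra_simps)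
    also have "\<dots> = (if m = 1 then - c else 0)"
      by (cases m) (auto simp: power_eq_if)
    also have "\<dots> = Dx (1 - fps_const c * fps_X) $ m" by (auto simp: Dx_nth)
    finally show "(?L * (1 - fps_const c * fps_X)) $ m = Dx (1 - fps_const c * fps_X) $ m" .
  qed
qed

definition cf :: "int fps \<Rightarrow> complex fps" where "cf g = Abs_fps (\<lambda>n. of_int (g $ n))"

lemma cf_nth [simp]: "cf g $ n = of_int (g $ n)" by (simp add: cf_def)
lemma cf_mult: "cf (g * h) = cf g * cf h" by (rule fps_ext) (simp add: fps_mult_nth)
lemma cf_one [simp]: "cf 1 = 1" by (rule fps_ext) simp
lemma cf_diff: "cf (g - h) = cf g - cf h" by (rule fps_ext) simp
lemma cf_X [simp]: "cf fps_X = fps_X" by (rule fps_ext) (simp add: fps_X_def)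
lemma cf_X_power: "cf (fps_X ^ k) = fps_X ^ k" by (rule fps_ext) (simp add: fps_X_power_nth)
lemma cf_power: "cf (g ^ j) = cf g ^ j" by (induction j) (simp_all add: cf_mult)
lemma cf_prod: "cf (\<Prod>k\<in>A. g k) = (\<Prod>k\<in>A. cf (g k))"
  by (induction A rule: infinite_finite_induct) (simp_all add: cf_mult)
lemma cf_factor: "cf ((1 - fps_X ^ k) ^ j) = (1 - fps_X ^ k) ^ j"
  by (simp add: cf_power cf_diff cf_X_power)
lemma cf_poly: "cf (fps_of_poly f) = fps_of_poly (map_poly of_int f)"
  by (rule fps_ext) (simp add: coeff_map_poly)

lemma fps_sum_list_nth: "(\<Sum>x\<leftarrow>xs. F x) $ m = (\<Sum>x\<leftarrow>xs. F x $ m)"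
  by (induction xs) auto

lemma lin_factor_prod:
  assumes "\<forall>a\<in>set xs. a \<noteq> (0::complex)"
  shows "(\<Prod>a\<leftarrow>xs. fps_const (- a) + fps_X) =
         fps_const (\<Prod>a\<leftarrow>xs. - a) * (\<Prod>a\<leftarrow>xs. 1 - fps_const (inverse a) * fps_X)"
  using assms
proof (induction xs)
  case Nil then show ?case by simp
next
  case (Cons a xs)
  have h: "fps_const (- a) + fps_X = fps_const (- a) * (1 - fps_const (inverse a) * fps_X)"
    using Cons.prems by (simp add: algebra_simps fps_const_mult[symmetric])
  define P where "P = (\<Prod>a\<leftarrow>xs. - a)"
  define Q where "Q = (\<Prod>a\<leftarrow>xs. 1 - fps_const (inverse a) * fps_X)"
  have "(\<Prod>a\<leftarrow>a # xs. fps_const (- a) + fps_X) = (fps_const (- a) + fps_X) * (fps_const P * Q)"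
    using Cons by (simp add: P_def Q_def)
  also have "\<dots> = (fps_const (- a) * fps_const P) * ((1 - fps_const (inverse a) * fps_X) * Q)"
    unfolding h by (simp only: mult_ac)
  also have "\<dots> = fps_const (\<Prod>a\<leftarrow>a # xs. - a) * (\<Prod>a\<leftarrow>a # xs. 1 - fps_const (inverse a) * fps_X)"
    by (simp add: P_def Q_def fps_const_mult)
  finally show ?case .
qed

lemma poly_prod_list_map: "poly (\<Prod>a\<leftarrow>xs. g a) x = (\<Prod>a\<leftarrow>xs. poly (g a) x)"
  by (induction xs) auto

context
  fixes f :: "int poly" and \<alpha> :: "complex list"
  assumes f0: "coeff f 0 = 1"
    and roots: "map_poly of_int f = smult (of_int (lead_coeff f)) (\<Prod>a\<leftarrow>\<alpha>. [:- a, 1:])"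
begin

lemma roots_nz: "a \<in> set \<alpha> \<Longrightarrow> a \<noteq> 0"
proof
  assume "a \<in> set \<alpha>" "a = 0"
  have "poly (map_poly (of_int :: int \<Rightarrow> complex) f) 0 = of_int (coeff f 0)"
    by (simp add: poly_0_coeff_0 coeff_map_poly)
  also have "\<dots> = 1" using f0 by simp
  finally have "poly (map_poly (of_int :: int \<Rightarrow> complex) f) 0 = 1" .
  moreover have "poly (\<Prod>a\<leftarrow>\<alpha>. [:- a, 1:]) 0 = 0"
    using \<open>a \<in> set \<alpha>\<close> \<open>a = 0\<close> by (auto simp: poly_prod_list_map prod_list_zero_iff)
  ultimately show False by (subst (asm) roots) simp
qed

lemma lc_prod: "of_int (lead_coeff f) * (\<Prod>a\<leftarrow>\<alpha>. - a) = (1::complex)"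
proof -
  have "poly (map_poly (of_int :: int \<Rightarrow> complex) f) 0 = 1"
    using f0 by (simp add: poly_0_coeff_0 coeff_map_poly)
  then show ?thesis by (subst (asm) roots) (simp add: poly_prod_list_map o_def)
qed

lemma fps_f_prod: "fps_of_poly (map_poly of_int f) = (\<Prod>a\<leftarrow>\<alpha>. 1 - fps_const (inverse a) * fps_X)"
proof -
  have "fps_of_poly (map_poly of_int f) =
      fps_const (of_int (lead_coeff f)) * (\<Prod>a\<leftarrow>\<alpha>. fps_const (- a) + fps_X)"
    by (subst roots) (simp add: fps_of_poly_smult fps_of_poly_prod_list o_def fps_of_poly_pCons)
  also have "\<dots> = fps_const (of_int (lead_coeff f) * (\<Prod>a\<leftarrow>\<alpha>. - a)) *
      (\<Prod>a\<leftarrow>\<alpha>. 1 - fps_const (inverse a) * fps_X)"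
    using lin_factor_prod[of \<alpha>] roots_nz by (simp add: mult.assoc)
  also have "\<dots> = (\<Prod>a\<leftarrow>\<alpha>. 1 - fps_const (inverse a) * fps_X)" using lc_prod by simp
  finally show ?thesis .
qed

lemma Lg_f_nth: "m \<ge> 1 \<Longrightarrow> Lg (fps_of_poly (map_poly of_int f)) $ m = - (\<Sum>a\<leftarrow>\<alpha>. inverse a ^ m)"
proof -
  assume m: "m \<ge> 1"
  have "Lg (\<Prod>a\<leftarrow>\<alpha>. 1 - fps_const (inverse a) * fps_X) = (\<Sum>a\<leftarrow>\<alpha>. Lg (1 - fps_const (inverse a) * fps_X))"
    by (rule Lg_prod_list) simp
  then have "Lg (fps_of_poly (map_poly of_int f)) $ m = (\<Sum>a\<leftarrow>\<alpha>. Lg (1 - fps_const (inverse a) * fps_X) $ m)"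
    by (simp only: fps_f_prod fps_sum_list_nth)
  also have "\<dots> = (\<Sum>a\<leftarrow>\<alpha>. - (inverse a ^ m))"
    using m by (simp only: Lg_1_minus_cX fps_nth_Abs_fps) simp
  also have "\<dots> = - (\<Sum>a\<leftarrow>\<alpha>. inverse a ^ m)" by (simp add: uminus_sum_list_map o_def)
  finally show ?thesis .
qed

end

lemma Lg_factors_nth:
  assumes m: "m \<ge> 1"
  shows "Lg (\<Prod>k\<in>{1..N}. (1 - fps_X ^ k) ^ j k) $ m =
         (\<Sum>k\<in>{1..N}. of_nat (j k) * (if k dvd m then - of_nat k else 0))"
proof -
  have "Lg (\<Prod>k\<in>{1..N}. (1 - fps_X ^ k) ^ j k) = (\<Sum>k\<in>{1..N}. Lg ((1 - fps_X ^ k) ^ j k))"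
    by (rule Lg_prod) (auto simp: fps_nth_power_0 zero_power)
  also have "\<dots> = (\<Sum>k\<in>{1..N}. of_nat (j k) * Lg (1 - fps_X ^ k))"
    by (rule sum.cong) (auto intro!: Lg_power simp: zero_power)
  finally show ?thesis using m
    by (simp add: fps_sum_nth Lg_1_minus_Xk)
qed

lemma psum_ef:
  fixes f :: "int poly" and \<alpha> :: "complex list"
  assumes f0: "coeff f 0 = 1"
    and roots: "map_poly of_int f = smult (of_int (lead_coeff f)) (\<Prod>a\<leftarrow>\<alpha>. [:- a, 1:])"
    and m: "m \<ge> 1"
  shows "(\<Sum>a\<leftarrow>\<alpha>. inverse a ^ m) = (\<Sum>k\<in>{k. k dvd m}. of_nat k * of_int (ef f k))"
proof -
  define e where "e = ef f"
  have EPm: "EP f e m" using ef_spec[OF f0] by (simp add: epe_iff e_def)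
  define F where "F = fps_of_poly (map_poly (of_int :: int \<Rightarrow> complex) f)"
  define G1 where "G1 = cf (fps_of_poly f * Pm e m)"
  define G2 where "G2 = cf (Pp e m)"
  have cPm: "cf (Pm e m) = (\<Prod>k\<in>{1..m}. (1 - fps_X ^ k) ^ nat (- e k))"
    unfolding Pm_def by (simp add: cf_prod cf_factor)
  have cPp: "cf (Pp e m) = (\<Prod>k\<in>{1..m}. (1 - fps_X ^ k) ^ nat (e k))"
    unfolding Pp_def by (simp add: cf_prod cf_factor)
  have F0: "F $ 0 = 1" using f0 by (simp add: F_def coeff_map_poly)
  have P0: "cf (Pm e m) $ 0 = 1" by (simp add: Pm_0)
  have G1eq: "G1 = F * cf (Pm e m)" by (simp add: G1_def F_def cf_mult cf_poly)
  have G10: "G1 $ 0 \<noteq> 0" using F0 P0 by (simp add: G1eq)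
  have agree: "G1 $ i = G2 $ i" if "i \<le> m" for i
    using EPm that unfolding EP_def G1_def G2_def by simp
  have "Lg G1 $ m = Lg G2 $ m" by (rule Lg_trunc[OF G10 agree]) auto
  moreover have "Lg G1 = Lg F + Lg (cf (Pm e m))"
    unfolding G1eq by (rule Lg_mult) (use F0 P0 in simp_all)
  ultimately have key: "Lg F $ m + Lg (cf (Pm e m)) $ m = Lg (cf (Pp e m)) $ m"
    by (simp add: G2_def)
  have LF: "Lg F $ m = - (\<Sum>a\<leftarrow>\<alpha>. inverse a ^ m)"
    unfolding F_def by (rule Lg_f_nth[OF f0 roots m])
  have "(\<Sum>a\<leftarrow>\<alpha>. inverse a ^ m) =
      (\<Sum>k\<in>{1..m}. of_nat (nat (- e k)) * (if k dvd m then - of_nat k else 0)) -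
      (\<Sum>k\<in>{1..m}. of_nat (nat (e k)) * (if k dvd m then - of_nat k else 0))"
    using key LF unfolding cPm cPp Lg_factors_nth[OF m] by (simp add: algebra_simps)
  also have "\<dots> = (\<Sum>k\<in>{1..m}. if k dvd m then of_nat k * of_int (e k) else 0)"
    unfolding sum_subtractf[symmetric]
  proof (rule sum.cong)
    fix k
    have "(of_nat (nat (- e k)) :: complex) - of_nat (nat (e k)) = - of_int (e k)"
    proof -
      have A: "(of_nat (nat (- e k)) :: complex) - of_nat (nat (e k)) = of_int (int (nat (- e k)) - int (nat (e k)))"
        by (simp only: of_int_diff of_int_of_nat_eq)
      have B: "int (nat (- e k)) - int (nat (e k)) = - e k" by simp
      show ?thesis using A B by simp
    qed
    note calculation_fact = this
    show "of_nat (nat (- e k)) * (if k dvd m then - of_nat k else 0) -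
        of_nat (nat (e k)) * (if k dvd m then - of_nat k else 0) =
        (if k dvd m then of_nat k * of_int (e k) else (0::complex))"
    proof (cases "k dvd m")
      case True
      have "(of_nat (nat (- e k)) :: complex) * (- of_nat k) - of_nat (nat (e k)) * (- of_nat k)
          = (of_nat (nat (- e k)) - of_nat (nat (e k))) * (- of_nat k)"
        by (rule left_diff_distrib[symmetric])
      also have "\<dots> = of_nat k * of_int (e k)" using calculation_fact by simp
      finally show ?thesis using True by simp
    qed simp
  qed simp
  also have "\<dots> = (\<Sum>k\<in>{k \<in> {1..m}. k dvd m}. of_nat k * of_int (e k))"
    by (rule sum.inter_filter[symmetric]) simp
  also have "{k \<in> {1..m}. k dvd m} = {k. k dvd m}"
    using m by (auto dest: dvd_imp_le intro: Nat.gr0I)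
  finally show ?thesis by (simp add: e_def)
qed

definition mu :: "nat \<Rightarrow> int" where
  "mu n = (if squarefree n then (-1) ^ card (prime_factors n) else 0)"

lemma mu_1 [simp]: "mu 1 = 1" by (simp add: mu_def)
lemma mu_Suc0 [simp]: "mu (Suc 0) = 1" by (simp add: mu_def)

lemma abs_mu_le: "\<bar>mu n\<bar> \<le> 1" by (simp add: mu_def)

lemma mu_mult_prime:
  assumes p: "prime p" and np: "\<not> p dvd s" and s: "s > 0"
  shows "mu (p * s) = - mu s"
proof -
  have cop: "coprime p s" using p np by (simp add: prime_imp_coprime)
  have sq: "squarefree (p * s) \<longleftrightarrow> squarefree s"
    using squarefree_mult_coprime[OF cop squarefree_prime[OF p]] squarefree_multD(2)[of p s] by blast
  have pf: "prime_factors (p * s) = insert p (prime_factors s)"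
    using p s by (simp add: prime_factors_product prime_prime_factors prime_gt_0_nat)
  have nin: "p \<notin> prime_factors s" using np by (auto simp: in_prime_factors_iff)
  show ?thesis unfolding mu_def sq pf using nin by simp
qed

lemma mu_sq: assumes "prime p" "p ^ 2 dvd d" shows "mu d = 0"
proof -
  have "\<not> squarefree d" using assms by (intro not_squarefreeI[of p]) auto
  then show ?thesis by (simp add: mu_def)
qed

lemma sum_mu:
  assumes n: "n > 1"
  shows "(\<Sum>d\<in>{d. d dvd n}. mu d) = 0"
proof -
  obtain p where p: "prime p" "p dvd n" using prime_factor_nat[of n] n by auto
  have p0: "p > 0" using p by (simp add: prime_gt_0_nat)
  define S where "S = {d. d dvd n}"
  define A where "A = {d \<in> S. \<not> p dvd d}"
  define B where "B = {d \<in> S. p dvd d \<and> \<not> p ^ 2 dvd d}"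
  define C where "C = {d \<in> S. p ^ 2 dvd d}"
  have finS: "finite S" using n by (simp add: S_def)
  have SU: "S = A \<union> (B \<union> C)" by (auto simp: A_def B_def C_def)
  have fin: "finite A" "finite B" "finite C" using finS by (auto simp: A_def B_def C_def)
  have sC: "(\<Sum>d\<in>C. mu d) = 0" using p by (auto simp: C_def intro!: sum.neutral mu_sq)
  have BA: "B = (\<lambda>s. p * s) ` A"
  proof
    show "(\<lambda>s. p * s) ` A \<subseteq> B"
    proof
      fix x assume "x \<in> (\<lambda>s. p * s) ` A"
      then obtain s where s: "s \<in> A" "x = p * s" by auto
      have cop: "coprime p s" using p s by (simp add: A_def prime_imp_coprime)
      have "p * s dvd n" using divides_mult[OF p(2) _ cop] s by (simp add: A_def S_def)
      moreover have "\<not> p ^ 2 dvd p * s"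
        using s p0 by (auto simp: A_def power2_eq_square)
      ultimately show "x \<in> B" using s by (simp add: B_def S_def)
    qed
    show "B \<subseteq> (\<lambda>s. p * s) ` A"
    proof
      fix d assume d: "d \<in> B"
      then obtain s where s: "d = p * s" by (auto simp: B_def)
      have "s dvd n" using d s by (auto simp: B_def S_def intro: dvd_mult_right)
      moreover have "\<not> p dvd s" using d s by (auto simp: B_def power2_eq_square)
      ultimately show "d \<in> (\<lambda>s. p * s) ` A" using s by (auto simp: A_def S_def)
    qed
  qed
  have inj: "inj_on (\<lambda>s. p * s) A" using p0 by (auto simp: inj_on_def)
  have sB: "(\<Sum>d\<in>B. mu d) = - (\<Sum>d\<in>A. mu d)"
  proof -
    have "(\<Sum>d\<in>B. mu d) = (\<Sum>s\<in>A. mu (p * s))" unfolding BA by (rule sum.reindex[OF inj, unfolded o_def])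
    also have "\<dots> = (\<Sum>s\<in>A. - mu s)"
    proof (rule sum.cong)
      fix s assume s: "s \<in> A"
      then have "s > 0" using n by (auto simp: A_def S_def intro: Nat.gr0I)
      then show "mu (p * s) = - mu s" using mu_mult_prime[OF p(1)] s by (simp add: A_def)
    qed simp
    finally show ?thesis by (simp add: sum_negf)
  qed
  have d1: "A \<inter> (B \<union> C) = {}" by (auto simp: A_def B_def C_def)
  have d2: "B \<inter> C = {}" by (auto simp: B_def C_def)
  have "(\<Sum>d\<in>S. mu d) = (\<Sum>d\<in>A. mu d) + ((\<Sum>d\<in>B. mu d) + (\<Sum>d\<in>C. mu d))"
    unfolding SU using fin d1 d2 by (simp add: sum.union_disjoint)
  then show ?thesis using sB sC by (simp add: S_def)
qed

lemma sum_mu_if: "n > 0 \<Longrightarrow> (\<Sum>d\<in>{d. d dvd n}. mu d) = (if n = 1 then 1 else 0)"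
  using sum_mu[of n] by auto

lemma moebius_inversion:
  fixes c P :: "nat \<Rightarrow> 'a::comm_ring_1"
  assumes P: "\<And>m. m \<ge> 1 \<Longrightarrow> P m = (\<Sum>d\<in>{d. d dvd m}. c d)"
    and k: "k \<ge> 1"
  shows "(\<Sum>d\<in>{d. d dvd k}. of_int (mu (k div d)) * P d) = c k"
proof -
  define D where "D = {d. d dvd k}"
  have finD: "finite D" using k by (simp add: D_def)
  have "(\<Sum>d\<in>D. of_int (mu (k div d)) * P d) = (\<Sum>d\<in>D. \<Sum>j\<in>{j \<in> D. j dvd d}. of_int (mu (k div d)) * c j)"
  proof (rule sum.cong)
    fix d assume d: "d \<in> D"
    then have "d \<ge> 1" using k by (auto simp: D_def intro: Nat.gr0I)
    moreover have "{j \<in> D. j dvd d} = {j. j dvd d}" using d by (auto simp: D_def intro: dvd_trans)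
    ultimately show "of_int (mu (k div d)) * P d = (\<Sum>j\<in>{j \<in> D. j dvd d}. of_int (mu (k div d)) * c j)"
      using P by (simp add: sum_distrib_left)
  qed simp
  also have "\<dots> = (\<Sum>j\<in>D. \<Sum>d\<in>{d \<in> D. j dvd d}. of_int (mu (k div d)) * c j)"
    by (rule sum.swap_restrict[OF finD finD])
  also have "\<dots> = (\<Sum>j\<in>D. (if j = k then c j else 0))"
  proof (rule sum.cong)
    fix j assume j: "j \<in> D"
    then obtain q where q: "k = j * q" by (auto simp: D_def)
    have q0: "q > 0" and j0: "j > 0" using q k by (auto intro: Nat.gr0I)
    have "(\<Sum>d\<in>{d \<in> D. j dvd d}. of_int (mu (k div d)) :: 'a) = (\<Sum>t\<in>{t. t dvd q}. of_int (mu t))"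
    proof -
      have hS: "k div (k div d) = d \<and> k div d \<in> {t. t dvd q}" if d: "d \<in> {d \<in> D. j dvd d}" for d
      proof -
        obtain v where v: "d = j * v" using d by auto
        obtain w where w: "k = d * w" using d by (auto simp: D_def)
        have v0: "v > 0" and w0: "w > 0" using v w k by (auto intro: Nat.gr0I)
        have "q = v * w" using q v w j0 by (simp add: mult_ac)
        then show ?thesis using w v v0 w0 j0 by auto
      qed
      have hT: "k div (k div t) = t \<and> k div t \<in> {d \<in> D. j dvd d}" if t: "t \<in> {t. t dvd q}" for t
      proof -
        obtain u where u: "q = t * u" using t by auto
        have t0: "t > 0" using u q0 by (auto intro: Nat.gr0I)
        have ku: "k = t * (j * u)" using q u by (simp add: mult_ac)
        show ?thesis using ku t0 j0 u q0 by (simp add: D_def)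
      qed
      show ?thesis
        by (rule sum.reindex_bij_witness[of _ "\<lambda>t. k div t" "\<lambda>d. k div d"]) (use hS hT in auto)
    qed
    also have "\<dots> = (if q = 1 then 1 else 0)"
      using arg_cong[OF sum_mu_if[OF q0], of "of_int :: int \<Rightarrow> 'a"] by (simp add: of_int_sum)
    also have "(q = 1) \<longleftrightarrow> (j = k)" using q j0 by auto
    finally show "(\<Sum>d\<in>{d \<in> D. j dvd d}. of_int (mu (k div d)) * c j) = (if j = k then c j else 0)"
      by (simp add: sum_distrib_right[symmetric])
  qed simp
  also have "\<dots> = c k" using finD by (simp add: D_def)
  finally show ?thesis by (simp add: D_def)
qed

lemma convex_powr: fixes x \<theta> :: real
  assumes "x > 0" "0 \<le> \<theta>" "\<theta> \<le> 1"
  shows "x powr \<theta> \<le> 1 - \<theta> + \<theta> * x"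
  using Youngs_inequality_0[of \<theta> "1 - \<theta>" x 1] assms by simp

lemma binom3: fixes w :: real assumes "w \<ge> 0"
  shows "(1 + w) ^ n \<ge> 1 + real n * w + real n * (real n - 1) / 2 * w^2
           + real n * (real n - 1) * (real n - 2) / 6 * w^3"
proof (induction n)
  case 0 then show ?case by simp
next
  case (Suc n)
  define A where "A = real n * (real n - 1) / 2"
  define C where "C = real n * (real n - 1) * (real n - 2) / 6"
  have C0: "C \<ge> 0"
  proof (cases "n \<ge> 2")
    case True then show ?thesis by (simp add: C_def)
  next
    case False then have "n = 0 \<or> n = 1" by auto
    then show ?thesis by (auto simp: C_def)
  qed
  have "(1 + w) ^ Suc n = (1 + w) * (1 + w) ^ n" by simp
  also have "\<dots> \<ge> (1 + w) * (1 + real n * w + A * w^2 + C * w^3)"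
    using Suc assms by (intro mult_left_mono) (auto simp: A_def C_def)
  finally have 1: "(1 + w) ^ Suc n \<ge> (1 + w) * (1 + real n * w + A * w^2 + C * w^3)" .
  have 2: "(1 + w) * (1 + real n * w + A * w^2 + C * w^3) =
      1 + (real n + 1) * w + (A + real n) * w^2 + (C + A) * w^3 + C * w^4"
    by (simp add: algebra_simps power2_eq_square power3_eq_cube power4_eq_xxxx)
  have 3: "C * w^4 \<ge> 0" using C0 assms by simp
  have 4: "A + real n = real (Suc n) * (real (Suc n) - 1) / 2" by (simp add: A_def field_simps)
  have 5: "C + A = real (Suc n) * (real (Suc n) - 1) * (real (Suc n) - 2) / 6"
    by (simp add: A_def C_def field_simps)
  have 6: "1 + real (Suc n) * w + real (Suc n) * (real (Suc n) - 1) / 2 * w^2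
           + real (Suc n) * (real (Suc n) - 1) * (real (Suc n) - 2) / 6 * w^3
        = 1 + (real n + 1) * w + (A + real n) * w^2 + (C + A) * w^3"
    by (simp only: 4 5) simp
  show ?case using 1 2 3 6 by linarith
qed

lemma cubic_pos: fixes v :: real assumes "v \<ge> 0" shows "18 - 18 * v + 3 * v^2 + v^3 \<ge> 0"
proof (cases "v \<le> 2")
  case True
  have "0 \<le> (v - 8/5)^2 * (v + 31/5)" using assms by simp
  moreover have "18 - 18 * v + 3 * v^2 + v^3 = (v - 8/5)^2 * (v + 31/5) + (266/125 - 18/25 * v)"
    by (simp add: field_simps power2_eq_square power3_eq_cube)
  ultimately show ?thesis using True by linarith
next
  case False
  have "v^3 \<ge> 2 * v^2" using False by (simp add: power2_eq_square power3_eq_cube)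
  moreover have "18 - 18 * v + 5 * v^2 = 5 * (v - 9/5)^2 + 9/5"
    by (simp add: algebra_simps power2_eq_square)
  moreover have "0 \<le> (v - 9/5)^2" by simp
  ultimately show ?thesis by linarith
qed

context
  fixes a y :: real and m :: nat
  assumes a1: "a \<ge> 1" and y0: "y > 0" and ay: "a * y ^ m \<ge> 1"
begin

lemma small_y_bound:
  assumes "y < 1"
  defines "u \<equiv> 1 / y"
  shows "a \<ge> u ^ m" "u > 1" "y = 1 / u"
proof -
  show "u > 1" using assms y0 by (simp add: u_def)
  show "y = 1 / u" using y0 by (simp add: u_def)
  have "u ^ m = 1 / y ^ m" by (simp add: u_def power_one_over)
  also have "\<dots> \<le> a" using ay y0 by (simp add: divide_le_eq mult.commute)
  finally show "a \<ge> u ^ m" .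
qed

lemma ineqG: "a + (m + 1) * y^2 \<ge> m + 1"
proof (cases "y \<ge> 1")
  case True
  then have "y^2 \<ge> 1" by (simp add: one_le_power)
  then have "(m + 1) * y^2 \<ge> m + 1" by simp
  then show ?thesis using a1 by linarith
next
  case False
  define u where "u = 1 / y"
  have au: "a \<ge> u ^ m" and u1: "u > 1" and yu: "y = 1 / u"
    using small_y_bound[OF _] False by (auto simp: u_def)
  define w where "w = u - 1"
  have w0: "w \<ge> 0" using u1 by (simp add: w_def)
  have b: "u ^ (m + 2) \<ge> 1 + real (m+2) * w + real (m+2) * (real (m+2) - 1) / 2 * w^2
           + real (m+2) * (real (m+2) - 1) * (real (m+2) - 2) / 6 * w^3"
    using binom3[OF w0, of "m+2"] by (simp add: w_def)
  have c3: "real (m+2) * (real (m+2) - 1) * (real (m+2) - 2) / 6 * w^3 \<ge> 0" using w0 by simp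
  have key: "u ^ (m + 2) + (m + 1) \<ge> (m + 1) * u^2"
  proof -
    have "1 + real (m+2) * w + real (m+2) * (real (m+2) - 1) / 2 * w^2 + (m + 1) - (m + 1) * u^2
        = (1 - m * w)^2 / 2 + 1/2 + m * w^2 / 2"
      by (simp add: w_def algebra_simps power2_eq_square field_simps)
    moreover have "(1 - m * w)^2 / 2 + 1/2 + m * w^2 / 2 \<ge> 0" using w0 by simp
    ultimately show ?thesis using b c3 by linarith
  qed
  have "a * u^2 \<ge> u ^ m * u^2" using au by (simp add: mult_right_mono)
  moreover have "u ^ (m + 2) = u ^ m * u^2" by (simp add: power_add power2_eq_square)
  ultimately have "a * u^2 + (m + 1) \<ge> (m + 1) * u^2" using key by linarith
  then have "(a * u^2 + (m + 1)) / u^2 \<ge> m + 1" using u1 by (simp add: le_divide_eq)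
  moreover have "(a * u^2 + (m + 1)) / u^2 = a + (m + 1) * y^2"
    using u1 unfolding yu by (simp add: field_simps power2_eq_square)
  ultimately show ?thesis by simp
qed

lemma ineqF: "a + 3 * (m + 1) * y^2 \<ge> (m + 1) + 2 * m * y"
proof (cases "y \<ge> 1")
  case True
  have y2: "y^2 \<ge> 1" "y^2 \<ge> y"
    using True mult_mono[of 1 y 1 y] mult_left_mono[of 1 y y] by (auto simp: power2_eq_square)
  have e: "a + 3 * (m + 1) * y^2 - ((m + 1) + 2 * m * y)
      = (a - 1) + (m + 1) * (y^2 - 1) + 2 * m * (y^2 - y) + 2 * y^2 + 1"
    by (simp add: algebra_simps)
  have "(m + 1) * (y^2 - 1) \<ge> 0" "2 * m * (y^2 - y) \<ge> 0" "2 * y^2 \<ge> 0" using y2 by auto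
  then show ?thesis using e a1 by linarith
next
  case False
  define u where "u = 1 / y"
  have au: "a \<ge> u ^ m" and u1: "u > 1" and yu: "y = 1 / u"
    using small_y_bound[OF _] False by (auto simp: u_def)
  define w where "w = u - 1"
  have w0: "w \<ge> 0" using u1 by (simp add: w_def)
  have b: "u ^ (m + 2) \<ge> 1 + real (m+2) * w + real (m+2) * (real (m+2) - 1) / 2 * w^2
           + real (m+2) * (real (m+2) - 1) * (real (m+2) - 2) / 6 * w^3"
    using binom3[OF w0, of "m+2"] by (simp add: w_def)
  define v where "v = m * w"
  have v0: "v \<ge> 0" using w0 by (simp add: v_def)
  have id: "1 + real (m+2) * w + real (m+2) * (real (m+2) - 1) / 2 * w^2
           + real (m+2) * (real (m+2) - 1) * (real (m+2) - 2) / 6 * w^3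
           + 3 * (m + 1) - (m + 1) * u^2 - 2 * m * u
         = (18 - 18 * v + 3 * v^2 + v^3) / 6 + (m * w^2 / 2 + (3 * m^2 + 2 * m) * w^3 / 6)"
    by (simp add: w_def v_def algebra_simps power2_eq_square power3_eq_cube field_simps)
  have p1: "m * w^2 / 2 + (3 * m^2 + 2 * m) * w^3 / 6 \<ge> 0" using w0 by simp
  have p2: "(18 - 18 * v + 3 * v^2 + v^3) / 6 \<ge> 0" using cubic_pos[OF v0] by simp
  have key: "u ^ (m + 2) + 3 * (m + 1) \<ge> (m + 1) * u^2 + 2 * m * u"
    using b id p1 p2 by linarith
  have "a * u^2 \<ge> u ^ m * u^2" using au by (simp add: mult_right_mono)
  moreover have "u ^ (m + 2) = u ^ m * u^2" by (simp add: power_add power2_eq_square)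
  ultimately have "a * u^2 + 3 * (m + 1) \<ge> (m + 1) * u^2 + 2 * m * u" using key by linarith
  then have "(a * u^2 + 3 * (m + 1)) / u^2 \<ge> ((m + 1) * u^2 + 2 * m * u) / u^2"
    using u1 by (intro divide_right_mono) auto
  moreover have "(a * u^2 + 3 * (m + 1)) / u^2 = a + 3 * (m + 1) * y^2"
    using u1 unfolding yu by (simp add: field_simps power2_eq_square)
  moreover have "((m + 1) * u^2 + 2 * m * u) / u^2 = (m + 1) + 2 * m * y"
    using u1 unfolding yu by (simp add: field_simps power2_eq_square)
  ultimately show ?thesis by simp
qed

lemma ineqH: "a + (m + 2) * y^2 \<ge> m * y"
proof (cases "y \<ge> 1")
  case True
  have "y^2 \<ge> y" using True mult_left_mono[of 1 y y] by (simp add: power2_eq_square)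
  then have "m * y \<le> m * y^2" by (simp add: mult_left_mono)
  moreover have "m * y^2 \<le> (m + 2) * y^2" by (simp add: mult_right_mono)
  ultimately have "(m + 2) * y^2 \<ge> m * y" by linarith
  then show ?thesis using a1 by linarith
next
  case False
  define u where "u = 1 / y"
  have au: "a \<ge> u ^ m" and u1: "u > 1" and yu: "y = 1 / u"
    using small_y_bound[OF _] False by (auto simp: u_def)
  define w where "w = u - 1"
  have w0: "w \<ge> 0" using u1 by (simp add: w_def)
  have b: "u ^ (m + 2) \<ge> 1 + real (m+2) * w + real (m+2) * (real (m+2) - 1) / 2 * w^2
           + real (m+2) * (real (m+2) - 1) * (real (m+2) - 2) / 6 * w^3"
    using binom3[OF w0, of "m+2"] by (simp add: w_def)
  have "real (m+2) * (real (m+2) - 1) / 2 * w^2 \<ge> 0"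
       "real (m+2) * (real (m+2) - 1) * (real (m+2) - 2) / 6 * w^3 \<ge> 0" using w0 by auto
  then have "u ^ (m + 2) \<ge> 1 + real (m+2) * w" using b by linarith
  moreover have "1 + real (m+2) * w + (m + 2) \<ge> m * u" using w0 by (simp add: w_def algebra_simps)
  moreover have "a * u^2 \<ge> u ^ m * u^2" using au by (simp add: mult_right_mono)
  moreover have "u ^ (m + 2) = u ^ m * u^2" by (simp add: power_add power2_eq_square)
  ultimately have "a * u^2 + (m + 2) \<ge> m * u" by linarith
  then have "(a * u^2 + (m + 2)) / u^2 \<ge> (m * u) / u^2"
    using u1 by (intro divide_right_mono) auto
  moreover have "(a * u^2 + (m + 2)) / u^2 = a + (m + 2) * y^2"
    using u1 unfolding yu by (simp add: field_simps power2_eq_square)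
  moreover have "(m * u) / u^2 = m * y"
    using u1 unfolding yu by (simp add: field_simps power2_eq_square)
  ultimately show ?thesis by simp
qed

lemma slot_bound:
  fixes \<theta> :: real
  assumes th: "0 \<le> \<theta>" "\<theta> \<le> 2/3"
  shows "(1 - \<theta>) * (1 + m) + \<theta> * (a + m * y) \<le> a + (m + 1) * y^2"
proof -
  define G where "G = a + (m + 1) * y^2 - (m + 1)"
  define H where "H = (m + 1) * y^2 - m * y"
  have G0: "G \<ge> 0" using ineqG by (simp add: G_def)
  have GH: "G + 2 * H \<ge> 0" using ineqF by (simp add: G_def H_def algebra_simps)
  have e: "a + (m + 1) * y^2 - ((1 - \<theta>) * (1 + m) + \<theta> * (a + m * y)) = (1 - \<theta>) * G + \<theta> * H"
    by (simp add: G_def H_def algebra_simps)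
  have "(1 - \<theta>) * G + \<theta> * H \<ge> 0"
  proof (cases "H \<ge> 0")
    case True then show ?thesis using th G0 by simp
  next
    case False
    have e2: "(1 - \<theta>) * G + \<theta> * H = (G + 2 * H) / 3 + (2/3 - \<theta>) * G + (2/3 - \<theta>) * (- H)"
      by (simp add: field_simps)
    have "(2/3 - \<theta>) * G \<ge> 0" by (rule mult_nonneg_nonneg) (use th G0 in auto)
    moreover have "(2/3 - \<theta>) * (- H) \<ge> 0" by (rule mult_nonneg_nonneg) (use th False in auto)
    ultimately have "0 \<le> (G + 2 * H) / 3 + (2/3 - \<theta>) * G + (2/3 - \<theta>) * (- H)"
      using GH by (intro add_nonneg_nonneg) auto
    then show ?thesis by (simp only: e2)
  qed
  then show ?thesis using e by linarith
qed

end

lemma divisor_sum_bound: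
  fixes B t :: real and m k :: nat
  assumes B1: "B \<ge> 1" and t0: "t > 0" and Bt: "B * t ^ m \<ge> 1" and k: "k \<ge> 1"
  shows "(\<Sum>d\<in>{d. d dvd k \<and> d < k}. B ^ d + m * t ^ d) + m * t ^ k
         \<le> real (card {d. d dvd k}) * (B powr (real k / 2) + (m + 1) * t ^ k)"
proof -
  define a where "a = B powr (real k / 2)"
  define y where "y = t powr (real k / 2)"
  define D where "D = {d. d dvd k \<and> d < k}"
  have k0: "real k > 0" using k by simp
  have a1: "a \<ge> 1" unfolding a_def using B1 by (intro ge_one_powr_ge_zero) auto
  have y0: "y > 0" using t0 by (simp add: y_def)
  have ym: "y ^ m = (t ^ m) powr (real k / 2)"
    using t0 by (simp add: y_def powr_power powr_realpow[symmetric] powr_powr mult_ac)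
  have ay: "a * y ^ m \<ge> 1" unfolding ym a_def powr_mult[symmetric]
    using Bt by (intro ge_one_powr_ge_zero) auto
  have y2: "y ^ 2 = t ^ k"
    using t0 k0 by (simp add: y_def powr_power powr_realpow)
  define R where "R = a + (m + 1) * y^2"
  define \<delta> where "\<delta> = max (m * y - (m + 1) * y^2) 0"
  have Bd: "B ^ d = a powr (2 * real d / real k)" for d
    using B1 k0 by (simp add: a_def powr_powr powr_realpow)
  have td: "t ^ d = y powr (2 * real d / real k)" for d
    using t0 k0 by (simp add: y_def powr_powr powr_realpow)
  have tm: "B ^ d + m * t ^ d \<le> R + (if 2 * d = k then \<delta> else 0)" if d: "d \<in> D" for d
  proof -
    have dk: "d < k" "d dvd k" using d by (auto simp: D_def)
    define \<theta> where "\<theta> = 2 * real d / real k"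
    show ?thesis
    proof (cases "2 * d = k")
      case True
      then have "\<theta> = 1" using k0 by (simp add: \<theta>_def)
      then have "B ^ d + m * t ^ d = a + m * y" using Bd[of d] td[of d] a1 y0 by (simp add: \<theta>_def)
      then show ?thesis using True by (simp add: R_def \<delta>_def)
    next
      case False
      obtain q where q: "k = d * q" using dk by auto
      have "q \<noteq> 0" "q \<noteq> 1" using q dk k by auto
      moreover have "q \<noteq> 2" using q False by auto
      ultimately have "q \<ge> 3" by linarith
      then have "3 * d \<le> k" using q by (metis mult.commute mult_le_mono2)
      then have th: "0 \<le> \<theta>" "\<theta> \<le> 2/3" using k0 by (auto simp: \<theta>_def field_simps)
      have th1: "\<theta> \<le> 1" using th by simp
      have "B ^ d \<le> 1 - \<theta> + \<theta> * a"
        unfolding Bd \<theta>_def[symmetric] using a1 th th1 by (intro convex_powr) auto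
      moreover have "t ^ d \<le> 1 - \<theta> + \<theta> * y"
        unfolding td \<theta>_def[symmetric] using y0 th th1 by (intro convex_powr) auto
      ultimately have "B ^ d + m * t ^ d \<le> (1 - \<theta> + \<theta> * a) + m * (1 - \<theta> + \<theta> * y)"
        by (simp add: add_mono mult_left_mono)
      also have "\<dots> = (1 - \<theta>) * (1 + m) + \<theta> * (a + m * y)" by (simp add: algebra_simps)
      finally have "B ^ d + m * t ^ d \<le> (1 - \<theta>) * (1 + m) + \<theta> * (a + m * y)" .
      also have "\<dots> \<le> R" unfolding R_def by (rule slot_bound[OF a1 y0 ay th])
      finally show ?thesis using False by simp
    qed
  qed
  have finD: "finite D" using k by (auto simp: D_def)
  have "(\<Sum>d\<in>D. B ^ d + m * t ^ d) \<le> (\<Sum>d\<in>D. R + (if 2 * d = k then \<delta> else 0))"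
    by (rule sum_mono) (rule tm)
  also have "\<dots> = card D * R + (\<Sum>d\<in>D. (if 2 * d = k then \<delta> else 0))"
    by (simp add: sum.distrib)
  also have "(\<Sum>d\<in>D. (if 2 * d = k then \<delta> else 0)) = \<delta> * card {d \<in> D. 2 * d = k}"
    using finD by (simp add: sum.If_cases Int_def)
  also have "\<dots> \<le> \<delta>"
  proof -
    have "{d \<in> D. 2 * d = k} \<subseteq> {k div 2}" by auto
    then have "card {d \<in> D. 2 * d = k} \<le> 1" using card_mono[of "{k div 2}"] by fastforce
    moreover have "\<delta> \<ge> 0" by (simp add: \<delta>_def)
    ultimately show ?thesis by (simp add: mult_left_le)
  qed
  finally have S: "(\<Sum>d\<in>D. B ^ d + m * t ^ d) \<le> card D * R + \<delta>" by simp
  have last: "\<delta> + m * y^2 \<le> R"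
  proof -
    have "m * y - (m + 1) * y^2 + m * y^2 \<le> R" using ineqH[OF a1 y0 ay] by (simp add: R_def algebra_simps)
    moreover have "m * y^2 \<le> (m + 1) * y^2" by (simp add: mult_right_mono)
    then have "0 + m * y^2 \<le> R" using a1 by (simp add: R_def)
    ultimately show ?thesis by (simp add: \<delta>_def)
  qed
  have cardk: "card {d. d dvd k} = card D + 1"
  proof -
    have "{d. d dvd k} = insert k D" using k by (auto simp: D_def dest: dvd_imp_le)
    moreover have "k \<notin> D" by (simp add: D_def)
    ultimately show ?thesis using finD by simp
  qed
  have "(\<Sum>d\<in>D. B ^ d + m * t ^ d) + m * t ^ k \<le> card D * R + R"
    using S last y2 by simp
  also have "\<dots> = real (card {d. d dvd k}) * (B powr (real k / 2) + (m + 1) * t ^ k)"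
    using cardk y2 by (simp add: R_def a_def algebra_simps)
  finally show ?thesis by (simp add: D_def)
qed

lemma norm_sum_list_pow_le:
  fixes xs :: "complex list"
  assumes "\<forall>a\<in>set xs. norm (inverse a) \<le> (t::real)"
  shows "norm (\<Sum>a\<leftarrow>xs. inverse a ^ d) \<le> real (length xs) * t ^ d"
  using assms
proof (induction xs)
  case Nil then show ?case by simp
next
  case (Cons x xs)
  have nx: "norm (inverse x) \<le> t" using Cons.prems by simp
  have "norm (inverse x) ^ d \<le> t ^ d" by (rule power_mono[OF nx]) simp
  then have "norm (inverse x ^ d) \<le> t ^ d" by (simp only: norm_power)
  moreover have "norm (\<Sum>a\<leftarrow>x # xs. inverse a ^ d) \<le> norm (inverse x ^ d) + norm (\<Sum>a\<leftarrow>xs. inverse a ^ d)"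
    by (simp add: norm_triangle_ineq)
  ultimately show ?case using Cons by (simp add: algebra_simps)
qed

lemma norm_prod_list_c: "norm (prod_list (xs :: complex list)) = prod_list (map norm xs)"
  by (induction xs) (simp_all add: norm_mult)

lemma prod_list_le_pow:
  assumes "\<forall>x\<in>set xs. 0 \<le> x \<and> x \<le> (t::real)"
  shows "prod_list xs \<le> t ^ length xs"
  using assms
proof (induction xs)
  case Nil then show ?case by simp
next
  case (Cons x xs)
  then have "0 \<le> prod_list xs" by (simp add: prod_list_nonneg)
  then show ?case using Cons by (simp add: mult_mono)
qed

lemma core_bound:
  fixes f :: "int poly" and \<alpha> :: "complex list" and k :: nat and b0 :: complex
  assumes f0: "coeff f 0 = 1"
    and roots: "map_poly of_int f = smult (of_int (lead_coeff f)) (\<Prod>a\<leftarrow>\<alpha>. [:- a, 1:])"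
    and k: "k \<ge> 1"
  defines "P \<equiv> (\<lambda>d. \<Sum>a\<leftarrow>\<alpha>. inverse a ^ d)"
  shows "norm (of_nat k * of_int (ef f k) - b0) \<le>
           (\<Sum>d\<in>{d. d dvd k \<and> d < k}. norm (P d)) + norm (P k - b0)"
proof -
  define c where "c = (\<lambda>d. (of_nat d * of_int (ef f d) :: complex))"
  define D where "D = {d. d dvd k \<and> d < k}"
  have Pc: "P m = (\<Sum>d\<in>{d. d dvd m}. c d)" if "m \<ge> 1" for m
    using psum_ef[OF f0 roots that] by (simp add: P_def c_def)
  have inv: "(\<Sum>d\<in>{d. d dvd k}. of_int (mu (k div d)) * P d) = c k"
    by (rule moebius_inversion[OF Pc k])
  have finD: "finite D" using k by (simp add: D_def)
  have Dk: "{d. d dvd k} = insert k D" using k by (auto simp: D_def dest: dvd_imp_le)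
  have kD: "k \<notin> D" by (simp add: D_def)
  have "c k = P k + (\<Sum>d\<in>D. of_int (mu (k div d)) * P d)"
    using inv k unfolding Dk by (simp add: sum.insert[OF finD kD])
  then have eq: "of_nat k * of_int (ef f k) - b0 = (P k - b0) + (\<Sum>d\<in>D. of_int (mu (k div d)) * P d)"
    by (simp add: c_def)
  have "norm (of_nat k * of_int (ef f k) - b0) \<le> norm (P k - b0) + norm (\<Sum>d\<in>D. of_int (mu (k div d)) * P d)"
    unfolding eq by (rule norm_triangle_ineq)
  also have "norm (\<Sum>d\<in>D. of_int (mu (k div d)) * P d) \<le> (\<Sum>d\<in>D. norm (of_int (mu (k div d)) * P d))"
    by (rule norm_sum)
  also have "\<dots> \<le> (\<Sum>d\<in>D. norm (P d))"
  proof (rule sum_mono)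
    fix d
    have "norm (of_int (mu (k div d)) * P d) = \<bar>real_of_int (mu (k div d))\<bar> * norm (P d)"
      by (simp add: norm_mult)
    also have "\<dots> \<le> 1 * norm (P d)"
      using abs_mu_le[of "k div d"] by (intro mult_right_mono) auto
    finally show "norm (of_int (mu (k div d)) * P d) \<le> norm (P d)" by simp
  qed
  finally show ?thesis by (simp add: D_def add.commute)
qed


lemma sum_B_bound:
  fixes B :: real
  assumes B1: "B \<ge> 1" and k: "k \<ge> 1"
  shows "(\<Sum>d\<in>{d. d dvd k \<and> d < k}. B ^ d) \<le> real (card {d. d dvd k}) * B powr (real k / 2)"
proof -
  define D where "D = {d. d dvd k \<and> d < k}"
  have finK: "finite {d. d dvd k}" using k by simp
  have finD: "finite D" using k by (simp add: D_def)
  have "(\<Sum>d\<in>D. B ^ d) \<le> (\<Sum>d\<in>D. B powr (real k / 2))"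
  proof (rule sum_mono)
    fix d assume d: "d \<in> D"
    then obtain q where q: "k = d * q" "d < k" by (auto simp: D_def)
    have "q \<noteq> 0" using q k by auto
    moreover have "q \<noteq> 1" using q by auto
    ultimately have "q \<ge> 2" by linarith
    then have "2 * d \<le> k" using q by (metis mult.commute mult_le_mono2)
    then have "real d \<le> real k / 2" by simp
    then have "B powr real d \<le> B powr (real k / 2)" using B1 by (intro powr_mono) auto
    then show "B ^ d \<le> B powr (real k / 2)" using B1 by (simp add: powr_realpow)
  qed
  also have "\<dots> = real (card D) * B powr (real k / 2)" by simp
  also have "\<dots> \<le> real (card {d. d dvd k}) * B powr (real k / 2)"
    using card_mono[OF finK, of D] by (intro mult_right_mono) (auto simp: D_def)
  finally show ?thesis by (simp add: D_def)
qed

lemma norm_powr_neg: fixes z :: complex assumes "z \<noteq> 0"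
  shows "norm z powr (- r) = norm (inverse z) powr r"
  by (simp add: powr_minus inverse_powr norm_inverse)

lemma prod_norm_inv:
  fixes xs :: "complex list" assumes "\<forall>a\<in>set xs. a \<noteq> 0"
  shows "prod_list (map (\<lambda>a. norm (inverse a)) xs) * prod_list (map norm xs) = 1"
  using assms
proof (induction xs)
  case Nil then show ?case by simp
next
  case (Cons a xs)
  define X where "X = prod_list (map (\<lambda>a. norm (inverse a)) xs)"
  define Y where "Y = prod_list (map norm xs)"
  have XY: "X * Y = 1" using Cons by (simp add: X_def Y_def)
  have a: "norm (inverse a) * norm a = 1" using Cons.prems by (simp add: norm_inverse)
  have "prod_list (map (\<lambda>a. norm (inverse a)) (a # xs)) * prod_list (map norm (a # xs))
      = (norm (inverse a) * norm a) * (X * Y)" by (simp add: X_def Y_def mult_ac)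
  then show ?case using XY a by simp
qed

theorem corollary3p8:
  fixes f :: "int poly" and \<alpha> :: "complex list"
  assumes f0: "coeff f 0 = 1"
    and deg: "degree f \<ge> 1"
    and roots: "map_poly of_int f = smult (of_int (lead_coeff f)) (\<Prod>a\<leftarrow>\<alpha>. [:- a, 1:])"
    and len: "length \<alpha> = degree f"
    and sorted: "sorted_wrt (\<lambda>a b. norm a \<le> norm b) \<alpha>"
    and sep: "degree f \<ge> 2 \<Longrightarrow> norm (\<alpha> ! 0) < norm (\<alpha> ! 1)"
  shows "(degree f \<ge> 2 \<longrightarrow> (\<forall>k::nat. k \<ge> 1 \<longrightarrow>
            norm (of_int (ef f k) - inverse ((\<alpha> ! 0) ^ k) / of_nat k)
            \<le> real (num_divisors k) / real k *
               (norm (\<alpha> ! 0) powr (- real k / 2)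
                + real (degree f) * norm (\<alpha> ! 1) powr (- real k))))
       \<and> (degree f = 1 \<longrightarrow> (\<forall>k::nat. k \<ge> 1 \<longrightarrow>
            norm (of_int (ef f k) - inverse ((\<alpha> ! 0) ^ k) / of_nat k)
            \<le> real (num_divisors k) / real k * norm (\<alpha> ! 0) powr (- real k / 2)))"
proof -
  define n where "n = degree f"
  obtain a0 rest where \<alpha>: "\<alpha> = a0 # rest" using len deg by (cases \<alpha>) auto
  have lenrest: "length rest = n - 1" using len by (simp add: \<alpha> n_def)
  have nz: "\<forall>a\<in>set \<alpha>. a \<noteq> 0" using roots_nz[OF f0 roots] by blast
  have a0nz: "a0 \<noteq> 0" using nz by (simp add: \<alpha>)
  define B where "B = norm (inverse a0)"
  have B0: "B > 0" using a0nz by (simp add: B_def)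
  define P where "P = (\<lambda>d. \<Sum>a\<leftarrow>\<alpha>. inverse a ^ d)"
  have Psplit: "P d = inverse a0 ^ d + (\<Sum>a\<leftarrow>rest. inverse a ^ d)" for d by (simp add: P_def \<alpha>)
  have lc0: "lead_coeff f \<noteq> 0" using deg by auto
  have prodinv: "prod_list (map (\<lambda>a. norm (inverse a)) \<alpha>) \<ge> 1"
  proof -
    have "norm (of_int (lead_coeff f) * (\<Prod>a\<leftarrow>\<alpha>. - a) :: complex) = 1" using lc_prod[OF f0 roots] by simp
    then have e1: "\<bar>real_of_int (lead_coeff f)\<bar> * prod_list (map norm \<alpha>) = 1"
      by (simp add: norm_mult norm_prod_list_c o_def)
    have e2: "prod_list (map (\<lambda>a. norm (inverse a)) \<alpha>) * prod_list (map norm \<alpha>) = 1"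
      by (rule prod_norm_inv[OF nz])
    have "prod_list (map norm \<alpha>) \<noteq> 0" using e1 by auto
    then have "prod_list (map (\<lambda>a. norm (inverse a)) \<alpha>) = \<bar>real_of_int (lead_coeff f)\<bar>"
      using e1 e2 by (metis mult_right_cancel)
    moreover have "\<bar>real_of_int (lead_coeff f)\<bar> \<ge> 1" using lc0 by linarith
    ultimately show ?thesis by simp
  qed
  have reduce: "norm (of_int (ef f k) - inverse ((\<alpha> ! 0) ^ k) / of_nat k)
      = norm (of_nat k * of_int (ef f k) - inverse a0 ^ k) / real k" if k: "k \<ge> 1" for k
  proof -
    have "of_int (ef f k) - inverse ((\<alpha> ! 0) ^ k) / of_nat k
        = (of_nat k * of_int (ef f k) - inverse a0 ^ k) / (of_nat k :: complex)"
      using k by (simp add: \<alpha> field_simps power_inverse)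
    then show ?thesis by (simp add: norm_divide)
  qed
  have core: "norm (of_nat k * of_int (ef f k) - inverse a0 ^ k) \<le>
      (\<Sum>d\<in>{d. d dvd k \<and> d < k}. norm (P d)) + norm (P k - inverse a0 ^ k)" if k: "k \<ge> 1" for k
    unfolding P_def by (rule core_bound[OF f0 roots k])
  have tau: "real (num_divisors k) = real (card {d. d dvd k})" for k by (simp add: num_divisors_def)
  show ?thesis
  proof (intro conjI impI allI)
    fix k :: nat assume n2: "degree f \<ge> 2" and k: "k \<ge> 1"
    obtain a1 rest' where rest: "rest = a1 # rest'" using lenrest n2 by (cases rest) (auto simp: n_def)
    have a1nz: "a1 \<noteq> 0" using nz by (simp add: \<alpha> rest)
    define t where "t = norm (inverse a1)"
    have t0: "t > 0" using a1nz by (simp add: t_def)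
    have s01: "norm a0 \<le> norm a1" using sorted by (simp add: \<alpha> rest)
    have srest: "\<forall>a\<in>set rest. norm (inverse a) \<le> t"
    proof
      fix a assume a: "a \<in> set rest"
      have "norm a1 \<le> norm a" using a sorted by (auto simp: \<alpha> rest)
      then show "norm (inverse a) \<le> t" using a1nz by (simp add: t_def norm_inverse le_imp_inverse_le)
    qed
    have tB: "t \<le> B" using s01 a0nz by (simp add: t_def B_def norm_inverse le_imp_inverse_le)
    have Bt: "B * t ^ (n - 1) \<ge> 1"
    proof -
      have "prod_list (map (\<lambda>a. norm (inverse a)) rest) \<le> t ^ length (map (\<lambda>a. norm (inverse a)) rest)"
        by (rule prod_list_le_pow) (use srest in auto)
      then have "prod_list (map (\<lambda>a. norm (inverse a)) rest) \<le> t ^ (n - 1)" by (simp add: lenrest)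
      then have "B * prod_list (map (\<lambda>a. norm (inverse a)) rest) \<le> B * t ^ (n - 1)"
        using B0 by (simp add: mult_left_mono)
      then show ?thesis using prodinv by (simp add: \<alpha> B_def)
    qed
    have B1: "B \<ge> 1"
    proof (rule ccontr)
      assume "\<not> B \<ge> 1"
      then have "B < 1" by simp
      then have "B * t ^ (n - 1) \<le> B * B ^ (n - 1)"
        using tB t0 B0 by (intro mult_left_mono power_mono) auto
      also have "\<dots> = B ^ Suc (n - 1)" by simp
      also have "\<dots> < 1" using \<open>B < 1\<close> B0 by (intro power_Suc_less_one) auto
      finally show False using Bt by simp
    qed
    have Pd: "norm (P d) \<le> B ^ d + real (n - 1) * t ^ d" for d
    proof -
      have "norm (P d) \<le> norm (inverse a0 ^ d) + norm (\<Sum>a\<leftarrow>rest. inverse a ^ d)"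
        unfolding Psplit by (rule norm_triangle_ineq)
      also have "\<dots> \<le> B ^ d + real (n - 1) * t ^ d"
        using norm_sum_list_pow_le[OF srest, of d] by (simp add: B_def norm_power lenrest)
      finally show ?thesis .
    qed
    have Pk: "norm (P k - inverse a0 ^ k) \<le> real (n - 1) * t ^ k"
      using norm_sum_list_pow_le[OF srest, of k] by (simp add: Psplit lenrest)
    have "norm (of_nat k * of_int (ef f k) - inverse a0 ^ k) \<le>
        (\<Sum>d\<in>{d. d dvd k \<and> d < k}. B ^ d + real (n - 1) * t ^ d) + real (n - 1) * t ^ k"
      using core[OF k] sum_mono[of "{d. d dvd k \<and> d < k}" "\<lambda>d. norm (P d)" "\<lambda>d. B ^ d + real (n - 1) * t ^ d"] Pd Pk
      by (smt (verit))
    also have "\<dots> \<le> real (card {d. d dvd k}) * (B powr (real k / 2) + real (n - 1 + 1) * t ^ k)"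
      by (rule divisor_sum_bound[OF B1 t0 Bt k])
    also have "real (n - 1 + 1) = real (degree f)" using n2 by (simp add: n_def)
    finally have num: "norm (of_nat k * of_int (ef f k) - inverse a0 ^ k) \<le>
        real (card {d. d dvd k}) * (B powr (real k / 2) + real (degree f) * t ^ k)" .
    have c0: "norm (\<alpha> ! 0) powr (- real k / 2) = B powr (real k / 2)"
      using norm_powr_neg[OF a0nz, of "real k / 2"] by (simp add: \<alpha> B_def)
    have c1: "norm (\<alpha> ! 1) powr (- real k) = t ^ k"
      using norm_powr_neg[OF a1nz, of "real k"] t0 by (simp add: \<alpha> rest t_def powr_realpow)
    show "norm (of_int (ef f k) - inverse ((\<alpha> ! 0) ^ k) / of_nat k)
        \<le> real (num_divisors k) / real k *
           (norm (\<alpha> ! 0) powr (- real k / 2) + real (degree f) * norm (\<alpha> ! 1) powr (- real k))"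
      unfolding reduce[OF k] c0 c1 tau using num k by (simp add: divide_right_mono)
  next
    fix k :: nat assume n1: "degree f = 1" and k: "k \<ge> 1"
    have rest: "rest = []" using lenrest n1 by (simp add: n_def)
    have B1: "B \<ge> 1" using prodinv by (simp add: \<alpha> rest B_def)
    have "norm (of_nat k * of_int (ef f k) - inverse a0 ^ k) \<le>
        (\<Sum>d\<in>{d. d dvd k \<and> d < k}. B ^ d)"
      using core[OF k] by (simp add: Psplit rest B_def norm_power)
    also have "\<dots> \<le> real (card {d. d dvd k}) * B powr (real k / 2)"
      by (rule sum_B_bound[OF B1 k])
    finally have num: "norm (of_nat k * of_int (ef f k) - inverse a0 ^ k) \<le>
        real (card {d. d dvd k}) * B powr (real k / 2)" .
    have c0: "norm (\<alpha> ! 0) powr (- real k / 2) = B powr (real k / 2)"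
      using norm_powr_neg[OF a0nz, of "real k / 2"] by (simp add: \<alpha> B_def)
    show "norm (of_int (ef f k) - inverse ((\<alpha> ! 0) ^ k) / of_nat k)
        \<le> real (num_divisors k) / real k * norm (\<alpha> ! 0) powr (- real k / 2)"
      unfolding reduce[OF k] c0 tau using num k by (simp add: divide_right_mono)
  qed
qed

end
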